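(* Let $\mathcal{F}=(X,\leq)$ be a poset and $j$ a nucleus on $\mathit{Up}(\mathcal{F})$. Let $I^{\mathcal{F},j}$ be a nuclear interpretation on $(\mathcal{F},j)$ that is consistent with $\vdash_\mathsf{IPC}$. Then $I^{\mathcal{F},j}=I^{\mathcal{F},j}_{\mathrm{st}}$, i.e. for all $j$-fixed upsets $U,V$: $I^{\mathcal{F},j}(\bot)=j\emptyset$, $I^{\mathcal{F},j}(\land)(U,V)=U\cap V$, $I^{\mathcal{F},j}(\lor)(U,V)=j(U\cup V)$, and $I^{\mathcal{F},j}(\to)(U,V)=\{x\in X: {\uparrow}x\cap U\subseteq V\}$.
   Context: The propositional language is generated by $\varphi ::= p \mid \bot \mid \varphi\land\varphi\mid\varphi\lor\varphi\mid\varphi\to\varphi$ with $p$ ranging over a countably infinite set $\mathit{Prop}$ of propositional variables; $\vdash_\mathsf{IPC}$ is the usual single-conclusion consequence relation of intuitionistic propositional logic (premises form a set, possibly empty). For a poset $\mathcal{F}=(X,\leq)$, $\mathit{Up}(\mathcal{F})$ is the set of upward closed subsets of $X$, and ${\uparrow}x=\{y: x\leq y\}$. A nucleus on $\mathit{Up}(\mathcal{F})$ is a map $j:\mathit{Up}(\mathcal{F})\to\mathit{Up}(\mathcal{F})$ with $U\subseteq jU$, $jjU\subseteq jU$, and $j(U\cap V)=jU\cap jV$ for all upsets $U,V$; $U$ is fixed if $jU=U$. A nuclear interpretation $I^{\mathcal{F},j}$ assigns to $\bot$ a fixed upset and to each of $\land,\lor,\to$ a binary function mapping pairs of fixed upsets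 to fixed upsets. A valuation is any map $v:\mathit{Prop}\to\mathit{Up}(\mathcal{F})$; semantic values are defined compositionally by $[\![p]\!]_v=j(v(p))$ and $[\![\#(\varphi_1,\dots,\varphi_n)]\!]_v=I^{\mathcal{F},j}(\#)([\![\varphi_1]\!]_v,\dots,[\![\varphi_n]\!]_v)$ (so all semantic values are fixed upsets). The interpretation is consistent with a consequence relation $\vdash$ if whenever $\Gamma\vdash\varphi$, for every valuation $v$, $\bigcap_{\psi\in\Gamma}[\![\psi]\!]_v\subseteq[\![\varphi]\!]_v$, where $\bigcap\emptyset=X$. The standard nuclear interpretation $I^{\mathcal{F},j}_{\mathrm{st}}$ is the one given by the formulas in the claim. *)

theory Defs
  imports Main
begin

datatype form =
    Var nat
  | Bot
  | And form form
  | Or form form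
  | Imp form form

inductive ipc :: "form set \<Rightarrow> form \<Rightarrow> bool" (infix "\<turnstile>\<^sub>I\<^sub>P\<^sub>C" 50) where
  Ass:   "\<phi> \<in> \<Gamma> \<Longrightarrow> \<Gamma> \<turnstile>\<^sub>I\<^sub>P\<^sub>C \<phi>"
| BotE:  "\<Gamma> \<turnstile>\<^sub>I\<^sub>P\<^sub>C Bot \<Longrightarrow> \<Gamma> \<turnstile>\<^sub>I\<^sub>P\<^sub>C \<phi>"
| AndI:  "\<Gamma> \<turnstile>\<^sub>I\<^sub>P\<^sub>C \<phi> \<Longrightarrow> \<Gamma> \<turnstile>\<^sub>I\<^sub>P\<^sub>C \<psi> \<Longrightarrow> \<Gamma> \<turnstile>\<^sub>I\<^sub>P\<^sub>C And \<phi> \<psi>"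
| AndE1: "\<Gamma> \<turnstile>\<^sub>I\<^sub>P\<^sub>C And \<phi> \<psi> \<Longrightarrow> \<Gamma> \<turnstile>\<^sub>I\<^sub>P\<^sub>C \<phi>"
| AndE2: "\<Gamma> \<turnstile>\<^sub>I\<^sub>P\<^sub>C And \<phi> \<psi> \<Longrightarrow> \<Gamma> \<turnstile>\<^sub>I\<^sub>P\<^sub>C \<psi>"
| OrI1:  "\<Gamma> \<turnstile>\<^sub>I\<^sub>P\<^sub>C \<phi> \<Longrightarrow> \<Gamma> \<turnstile>\<^sub>I\<^sub>P\<^sub>C Or \<phi> \<psi>"
| OrI2:  "\<Gamma> \<turnstile>\<^sub>I\<^sub>P\<^sub>C \<psi> \<Longrightarrow> \<Gamma> \<turnstile>\<^sub>I\<^sub>P\<^sub>C Or \<phi> \<psi>"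
| OrE:   "\<Gamma> \<turnstile>\<^sub>I\<^sub>P\<^sub>C Or \<phi> \<psi> \<Longrightarrow> insert \<phi> \<Gamma> \<turnstile>\<^sub>I\<^sub>P\<^sub>C \<chi> \<Longrightarrow> insert \<psi> \<Gamma> \<turnstile>\<^sub>I\<^sub>P\<^sub>C \<chi>
          \<Longrightarrow> \<Gamma> \<turnstile>\<^sub>I\<^sub>P\<^sub>C \<chi>"
| ImpI:  "insert \<phi> \<Gamma> \<turnstile>\<^sub>I\<^sub>P\<^sub>C \<psi> \<Longrightarrow> \<Gamma> \<turnstile>\<^sub>I\<^sub>P\<^sub>C Imp \<phi> \<psi>"
| ImpE:  "\<Gamma> \<turnstile>\<^sub>I\<^sub>P\<^sub>C Imp \<phi> \<psi> \<Longrightarrow> \<Gamma> \<turnstile>\<^sub>I\<^sub>P\<^sub>C \<phi> \<Longrightarrow> \<Gamma> \<turnstile>\<^sub>I\<^sub>P\<^sub>C \<psi>"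

definition poset :: "'a set \<Rightarrow> ('a \<Rightarrow> 'a \<Rightarrow> bool) \<Rightarrow> bool" where
  "poset X le \<longleftrightarrow>
     (\<forall>x\<in>X. le x x) \<and>
     (\<forall>x\<in>X. \<forall>y\<in>X. \<forall>z\<in>X. le x y \<longrightarrow> le y z \<longrightarrow> le x z) \<and>
     (\<forall>x\<in>X. \<forall>y\<in>X. le x y \<longrightarrow> le y x \<longrightarrow> x = y)"

definition upset :: "'a set \<Rightarrow> ('a \<Rightarrow> 'a \<Rightarrow> bool) \<Rightarrow> 'a set \<Rightarrow> bool" where
  "upset X le U \<longleftrightarrow> U \<subseteq> X \<and> (\<forall>x\<in>U. \<forall>y\<in>X. le x y \<longrightarrow> y \<in> U)"

definition up :: "'a set \<Rightarrow> ('a \<Rightarrow> 'a \<Rightarrow> bool) \<Rightarrow> 'a \<Rightarrow> 'a set" where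
  "up X le x = {y \<in> X. le x y}"

text \<open>A nucleus on Up(F): a map Up(F) -> Up(F) (only its values on upsets matter).\<close>
definition nucleus :: "'a set \<Rightarrow> ('a \<Rightarrow> 'a \<Rightarrow> bool) \<Rightarrow> ('a set \<Rightarrow> 'a set) \<Rightarrow> bool" where
  "nucleus X le j \<longleftrightarrow>
     (\<forall>U. upset X le U \<longrightarrow> upset X le (j U)) \<and>
     (\<forall>U. upset X le U \<longrightarrow> U \<subseteq> j U) \<and>
     (\<forall>U. upset X le U \<longrightarrow> j (j U) \<subseteq> j U) \<and>
     (\<forall>U V. upset X le U \<longrightarrow> upset X le V \<longrightarrow> j (U \<inter> V) = j U \<inter> j V)"

definition fixed_upset :: "'a set \<Rightarrow> ('a \<Rightarrow> 'a \<Rightarrow> bool) \<Rightarrow> ('a set \<Rightarrow> 'a set) \<Rightarrow> 'a set \<Rightarrow> bool" where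
  "fixed_upset X le j U \<longleftrightarrow> upset X le U \<and> j U = U"

definition nuclear_interpretation ::
  "'a set \<Rightarrow> ('a \<Rightarrow> 'a \<Rightarrow> bool) \<Rightarrow> ('a set \<Rightarrow> 'a set) \<Rightarrow>
   'a set \<Rightarrow> ('a set \<Rightarrow> 'a set \<Rightarrow> 'a set) \<Rightarrow> ('a set \<Rightarrow> 'a set \<Rightarrow> 'a set) \<Rightarrow>
   ('a set \<Rightarrow> 'a set \<Rightarrow> 'a set) \<Rightarrow> bool" where
  "nuclear_interpretation X le j ibot iand ior iimp \<longleftrightarrow>
     fixed_upset X le j ibot \<and>
     (\<forall>U V. fixed_upset X le j U \<longrightarrow> fixed_upset X le j V \<longrightarrow>
        fixed_upset X le j (iand U V) \<and> fixed_upset X le j (ior U V) \<and>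
        fixed_upset X le j (iimp U V))"

definition valuation :: "'a set \<Rightarrow> ('a \<Rightarrow> 'a \<Rightarrow> bool) \<Rightarrow> (nat \<Rightarrow> 'a set) \<Rightarrow> bool" where
  "valuation X le v \<longleftrightarrow> (\<forall>p. upset X le (v p))"

primrec sem ::
  "('a set \<Rightarrow> 'a set) \<Rightarrow> 'a set \<Rightarrow> ('a set \<Rightarrow> 'a set \<Rightarrow> 'a set) \<Rightarrow> ('a set \<Rightarrow> 'a set \<Rightarrow> 'a set) \<Rightarrow>
   ('a set \<Rightarrow> 'a set \<Rightarrow> 'a set) \<Rightarrow> (nat \<Rightarrow> 'a set) \<Rightarrow> form \<Rightarrow> 'a set" where
  "sem j ibot iand ior iimp v (Var p) = j (v p)"
| "sem j ibot iand ior iimp v Bot = ibot"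
| "sem j ibot iand ior iimp v (And a b) = iand (sem j ibot iand ior iimp v a) (sem j ibot iand ior iimp v b)"
| "sem j ibot iand ior iimp v (Or a b) = ior (sem j ibot iand ior iimp v a) (sem j ibot iand ior iimp v b)"
| "sem j ibot iand ior iimp v (Imp a b) = iimp (sem j ibot iand ior iimp v a) (sem j ibot iand ior iimp v b)"

text \<open>Consistency with IPC; the intersection over the premises is taken inside X,
  so that the empty intersection is X.\<close>
definition consistent_IPC ::
  "'a set \<Rightarrow> ('a \<Rightarrow> 'a \<Rightarrow> bool) \<Rightarrow> ('a set \<Rightarrow> 'a set) \<Rightarrow>
   'a set \<Rightarrow> ('a set \<Rightarrow> 'a set \<Rightarrow> 'a set) \<Rightarrow> ('a set \<Rightarrow> 'a set \<Rightarrow> 'a set) \<Rightarrow>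
   ('a set \<Rightarrow> 'a set \<Rightarrow> 'a set) \<Rightarrow> bool" where
  "consistent_IPC X le j ibot iand ior iimp \<longleftrightarrow>
     (\<forall>\<Gamma> \<phi>. \<Gamma> \<turnstile>\<^sub>I\<^sub>P\<^sub>C \<phi> \<longrightarrow>
        (\<forall>v. valuation X le v \<longrightarrow>
           X \<inter> (\<Inter>\<psi>\<in>\<Gamma>. sem j ibot iand ior iimp v \<psi>) \<subseteq> sem j ibot iand ior iimp v \<phi>))"

end

theory Submission
  imports Defs
begin

lemma nuc_mono:
  assumes "nucleus X le j" "upset X le U" "upset X le V" "U \<subseteq> V"
  shows "j U \<subseteq> j V"
proof -
  have "j U = j (U \<inter> V)" using assms(4) by (simp add: Int_absorb2)
  also have "\<dots> = j U \<inter> j V" using assms unfolding nucleus_def by blast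
  finally show ?thesis by blast
qed

lemma sem_fixed:
  assumes "nucleus X le j" "nuclear_interpretation X le j ibot iand ior iimp" "valuation X le v"
  shows "fixed_upset X le j (sem j ibot iand ior iimp v \<phi>)"
proof (induction \<phi>)
  case (Var p)
  have u: "upset X le (v p)" using assms(3) unfolding valuation_def by blast
  then have "upset X le (j (v p))" using assms(1) unfolding nucleus_def by blast
  moreover have "j (j (v p)) = j (v p)"
    using u calculation assms(1) unfolding nucleus_def by blast
  ultimately show ?case by (simp add: fixed_upset_def)
next
  case Bot then show ?case using assms(2) unfolding nuclear_interpretation_def by simp
qed (use assms(2) in \<open>auto simp: nuclear_interpretation_def\<close>)

lemma cons:
  assumes "consistent_IPC X le j ibot iand ior iimp" "\<Gamma> \<turnstile>\<^sub>I\<^sub>P\<^sub>C \<phi>" "valuation X le v"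
    "\<forall>\<psi>\<in>\<Gamma>. x \<in> sem j ibot iand ior iimp v \<psi>" "x \<in> X"
  shows "x \<in> sem j ibot iand ior iimp v \<phi>"
  using assms unfolding consistent_IPC_def by blast

lemma ipc_mp: "{a, Imp a b} \<turnstile>\<^sub>I\<^sub>P\<^sub>C b" by (rule ImpE[of _ a b]) (auto intro: Ass)
lemma ipc_k: "{b} \<turnstile>\<^sub>I\<^sub>P\<^sub>C Imp a b" by (rule ImpI) (auto intro: Ass)
lemma ipc_t7: "{Imp a b} \<turnstile>\<^sub>I\<^sub>P\<^sub>C Imp a (And a b)"
  by (rule ImpI, rule AndI, rule Ass, simp, rule ImpE[of _ a b]) (auto intro: Ass)
lemma ipc_t8: "{Imp a (And a b)} \<turnstile>\<^sub>I\<^sub>P\<^sub>C Imp a b"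
  by (rule ImpI, rule AndE2[of _ a b], rule ImpE[of _ a]) (auto intro: Ass)
lemma ipc_ore: "{Or a b, Imp a c, Imp b c} \<turnstile>\<^sub>I\<^sub>P\<^sub>C c"
  by (rule OrE[of _ a b], rule Ass, simp, rule ImpE[of _ a], rule Ass, simp, rule Ass, simp,
          rule ImpE[of _ b], rule Ass, simp, rule Ass, simp)
lemma ipc_andE1: "{And a b} \<turnstile>\<^sub>I\<^sub>P\<^sub>C a" by (rule AndE1[of _ a b]) (auto intro: Ass)
lemma ipc_andE2: "{And a b} \<turnstile>\<^sub>I\<^sub>P\<^sub>C b" by (rule AndE2[of _ a b]) (auto intro: Ass)
lemma ipc_andI: "{a, b} \<turnstile>\<^sub>I\<^sub>P\<^sub>C And a b" by (rule AndI) (auto intro: Ass)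
lemma ipc_or1: "{a} \<turnstile>\<^sub>I\<^sub>P\<^sub>C Or a b" by (rule OrI1) (auto intro: Ass)
lemma ipc_or2: "{b} \<turnstile>\<^sub>I\<^sub>P\<^sub>C Or a b" by (rule OrI2) (auto intro: Ass)
lemma ipc_bt: "{Bot} \<turnstile>\<^sub>I\<^sub>P\<^sub>C a" by (rule BotE) (auto intro: Ass)

lemma upset_empty: "upset X le {}" by (simp add: upset_def)

theorem theorem2:
  fixes X :: "'a set" and le :: "'a \<Rightarrow> 'a \<Rightarrow> bool" and j :: "'a set \<Rightarrow> 'a set"
    and ibot :: "'a set" and iand ior iimp :: "'a set \<Rightarrow> 'a set \<Rightarrow> 'a set"
  assumes "poset X le"
    and nuc: "nucleus X le j"
    and ni: "nuclear_interpretation X le j ibot iand ior iimp"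
    and ci: "consistent_IPC X le j ibot iand ior iimp"
  shows "ibot = j {} \<and>
    (\<forall>U V. fixed_upset X le j U \<longrightarrow> fixed_upset X le j V \<longrightarrow>
       iand U V = U \<inter> V \<and>
       ior U V = j (U \<union> V) \<and>
       iimp U V = {x \<in> X. up X le x \<inter> U \<subseteq> V})"
proof -
  let ?S = "sem j ibot iand ior iimp"
  have fx: "\<And>v \<phi>. valuation X le v \<Longrightarrow> fixed_upset X le j (?S v \<phi>)"
    using sem_fixed[OF nuc ni] by blast
  have sX: "\<And>v \<phi>. valuation X le v \<Longrightarrow> ?S v \<phi> \<subseteq> X"
    using fx unfolding fixed_upset_def upset_def by blast
  have c1: "\<And>v a \<phi> x. {a} \<turnstile>\<^sub>I\<^sub>P\<^sub>C \<phi> \<Longrightarrow> valuation X le v \<Longrightarrow> x \<in> ?S v a \<Longrightarrow> x \<in> ?S v \<phi>"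
    using cons[OF ci] sX by blast
  have c2: "\<And>v a b \<phi> x. {a, b} \<turnstile>\<^sub>I\<^sub>P\<^sub>C \<phi> \<Longrightarrow> valuation X le v \<Longrightarrow> x \<in> ?S v a \<Longrightarrow> x \<in> ?S v b
      \<Longrightarrow> x \<in> ?S v \<phi>"
    using cons[OF ci] sX by blast
  have c3: "\<And>v a b c \<phi> x. {a, b, c} \<turnstile>\<^sub>I\<^sub>P\<^sub>C \<phi> \<Longrightarrow> valuation X le v \<Longrightarrow> x \<in> ?S v a
      \<Longrightarrow> x \<in> ?S v b \<Longrightarrow> x \<in> ?S v c \<Longrightarrow> x \<in> ?S v \<phi>"
    using cons[OF ci] sX by blast
  have jid: "\<And>U. upset X le U \<Longrightarrow> U \<subseteq> j U" using nuc unfolding nucleus_def by blast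
  have jup: "\<And>U. upset X le U \<Longrightarrow> upset X le (j U)" using nuc unfolding nucleus_def by blast
  have jjj: "\<And>U. upset X le U \<Longrightarrow> j (j U) = j U"
    using nuc jid jup unfolding nucleus_def by (meson subset_antisym)
  have jint: "\<And>U V. upset X le U \<Longrightarrow> upset X le V \<Longrightarrow> j (U \<inter> V) = j U \<inter> j V"
    using nuc unfolding nucleus_def by blast
  have bot: "ibot = j {}"
  proof
    let ?v = "\<lambda>_::nat. {}::'a set"
    have val: "valuation X le ?v" by (simp add: valuation_def upset_empty)
    have d: "{Bot} \<turnstile>\<^sub>I\<^sub>P\<^sub>C Var 0" by (rule ipc_bt)
    show "ibot \<subseteq> j {}" using c1[OF d val] by auto
    have "fixed_upset X le j ibot" using ni unfolding nuclear_interpretation_def by blast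
    then show "j {} \<subseteq> ibot" using nuc_mono[OF nuc upset_empty, of ibot]
      unfolding fixed_upset_def by auto
  qed
  show ?thesis
  proof (intro conjI bot allI impI)
    fix U V assume fU: "fixed_upset X le j U" and fV: "fixed_upset X le j V"
    have uU: "upset X le U" and uV: "upset X le V" and jU: "j U = U" and jV: "j V = V"
      using fU fV unfolding fixed_upset_def by auto
    have uUV: "upset X le (U \<inter> V)" using uU uV unfolding upset_def by blast
    define v1 where "v1 = (\<lambda>n::nat. if n = 0 then U else V)"
    have val1: "valuation X le v1" using uU uV by (simp add: valuation_def v1_def)
    have s0: "?S v1 (Var 0) = U" using jU by (simp add: v1_def)
    have s1: "?S v1 (Var 1) = V" using jV by (simp add: v1_def)
    have AND: "iand U V = U \<inter> V"
    proof
      show "iand U V \<subseteq> U \<inter> V"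
        using c1[OF ipc_andE1[of "Var 0" "Var 1"] val1] c1[OF ipc_andE2[of "Var 0" "Var 1"] val1] s0 s1
        by auto
      show "U \<inter> V \<subseteq> iand U V"
        using c2[OF ipc_andI[of "Var 0" "Var 1"] val1] s0 s1 by auto
    qed
    have ANDg: "\<And>A B. fixed_upset X le j A \<Longrightarrow> fixed_upset X le j B \<Longrightarrow> iand A B = A \<inter> B"
    proof -
      fix A B assume fA: "fixed_upset X le j A" and fB: "fixed_upset X le j B"
      define w where "w = (\<lambda>n::nat. if n = 0 then A else B)"
      have valw: "valuation X le w" using fA fB by (simp add: valuation_def w_def fixed_upset_def)
      have t0: "?S w (Var 0) = A" using fA by (simp add: w_def fixed_upset_def)
      have t1: "?S w (Var 1) = B" using fB by (simp add: w_def fixed_upset_def)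
      show "iand A B = A \<inter> B"
      proof
        show "iand A B \<subseteq> A \<inter> B"
          using c1[OF ipc_andE1[of "Var 0" "Var 1"] valw] c1[OF ipc_andE2[of "Var 0" "Var 1"] valw] t0 t1
          by auto
        show "A \<inter> B \<subseteq> iand A B"
          using c2[OF ipc_andI[of "Var 0" "Var 1"] valw] t0 t1 by auto
      qed
    qed
    have IMPg: "\<And>A B. fixed_upset X le j A \<Longrightarrow> fixed_upset X le j B \<Longrightarrow>
        iimp A B = {x \<in> X. up X le x \<inter> A \<subseteq> B}"
    proof -
      fix A B assume fA: "fixed_upset X le j A" and fB: "fixed_upset X le j B"
      have uA: "upset X le A" and uB: "upset X le B" and jA: "j A = A" and jB: "j B = B"
        using fA fB unfolding fixed_upset_def by auto
      define W where "W = {x \<in> X. up X le x \<inter> A \<subseteq> B}"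
      have uW: "upset X le W"
      proof -
        have "\<And>x y. x \<in> W \<Longrightarrow> y \<in> X \<Longrightarrow> le x y \<Longrightarrow> y \<in> W"
        proof -
          fix x y
          assume xW: "x \<in> W" and yX: "y \<in> X" and xy: "le x y"
          have xX: "x \<in> X" using xW W_def by blast
          have "up X le y \<inter> A \<subseteq> B"
          proof
            fix z assume z: "z \<in> up X le y \<inter> A"
            have zX: "z \<in> X" and yz: "le y z" using z unfolding up_def by auto
            have "le x z" using assms(1) xX yX zX xy yz unfolding poset_def by blast
            then have "z \<in> up X le x \<inter> A" using z zX unfolding up_def by blast
            then show "z \<in> B" using xW W_def by blast
          qed
          then show "y \<in> W" using yX W_def by blast
        qed
        then show ?thesis unfolding upset_def W_def by blast
      qed
      have WA: "W \<inter> A \<subseteq> B"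
      proof
        fix x assume x: "x \<in> W \<inter> A"
        then have xX: "x \<in> X" using W_def by blast
        then have "le x x" using assms(1) unfolding poset_def by blast
        then have "x \<in> up X le x \<inter> A" using x xX unfolding up_def by blast
        then show "x \<in> B" using x W_def by blast
      qed
      have jW: "j W = W"
      proof
        show "W \<subseteq> j W" using jid[OF uW] .
        show "j W \<subseteq> W"
        proof
          fix x assume x: "x \<in> j W"
          have xX: "x \<in> X" using x jup[OF uW] unfolding upset_def by blast
          have "up X le x \<inter> A \<subseteq> B"
          proof
            fix y assume y: "y \<in> up X le x \<inter> A"
            have "y \<in> j W" using x y jup[OF uW] unfolding up_def upset_def by blast
            moreover have "y \<in> j A" using y jA by simp
            ultimately have "y \<in> j (W \<inter> A)" using jint[OF uW uA] by blast
            moreover have "j (W \<inter> A) \<subseteq> j B"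
              using nuc_mono[OF nuc _ uB WA] uW uA unfolding upset_def by blast
            ultimately show "y \<in> B" using jB by blast
          qed
          then show "x \<in> W" using xX unfolding W_def by blast
        qed
      qed
      define w where "w = (\<lambda>n::nat. if n = 0 then A else if n = 1 then B else W)"
      have valw: "valuation X le w" using uA uB uW by (simp add: valuation_def w_def)
      have t0: "?S w (Var 0) = A" using jA by (simp add: w_def)
      have t1: "?S w (Var 1) = B" using jB by (simp add: w_def)
      have t2: "?S w (Var 2) = W" using jW by (simp add: w_def)
      have fiAB: "fixed_upset X le j (iimp A B)" using ni fA fB unfolding nuclear_interpretation_def by blast
      show "iimp A B = W"
      proof
        show "iimp A B \<subseteq> W"
        proof
          fix x assume x: "x \<in> iimp A B"
          have xX: "x \<in> X" using x fiAB unfolding fixed_upset_def upset_def by blast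
          have "up X le x \<inter> A \<subseteq> B"
          proof
            fix y assume y: "y \<in> up X le x \<inter> A"
            have "y \<in> iimp A B" using x y fiAB unfolding fixed_upset_def upset_def up_def by blast
            then show "y \<in> B" using c2[OF ipc_mp[of "Var 0" "Var 1"] valw, of y] y t0 t1 by auto
          qed
          then show "x \<in> W" using xX W_def by blast
        qed
        have fAW: "fixed_upset X le j W" using uW jW by (simp add: fixed_upset_def)
        have fAB: "fixed_upset X le j (A \<inter> B)"
          using uA uB jint jA jB unfolding fixed_upset_def upset_def by auto
        have BW: "B \<subseteq> W"
        proof
          fix x assume x: "x \<in> B"
          then have xX: "x \<in> X" using uB unfolding upset_def by blast
          have "up X le x \<inter> A \<subseteq> B" using x uB unfolding up_def upset_def by blast
          then show "x \<in> W" using xX W_def by blast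
        qed
        have eq: "A \<inter> W = A \<inter> B" using WA BW by blast
        show "W \<subseteq> iimp A B"
        proof
          fix x assume x: "x \<in> W"
          have "x \<in> iimp A W" using c1[OF ipc_k[of "Var 2" "Var 0"] valw, of x] x t0 t2 by auto
          then have "x \<in> iimp A (iand A W)"
            using c1[OF ipc_t7[of "Var 0" "Var 2"] valw, of x] t0 t2 by auto
          then have "x \<in> iimp A (iand A B)" using ANDg[OF fA fAW] ANDg[OF fA fB] eq by simp
          then show "x \<in> iimp A B"
            using c1[OF ipc_t8[of "Var 0" "Var 1"] valw, of x] t0 t1 by auto
        qed
      qed
    qed
    show "iand U V = U \<inter> V" by (rule AND)
    show "iimp U V = {x \<in> X. up X le x \<inter> U \<subseteq> V}" by (rule IMPg[OF fU fV])
    have uUoV: "upset X le (U \<union> V)" using uU uV unfolding upset_def by blast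
    define W where "W = j (U \<union> V)"
    have uW: "upset X le W" using jup[OF uUoV] W_def by simp
    have jW: "j W = W" using jjj[OF uUoV] W_def by simp
    have fW: "fixed_upset X le j W" using uW jW by (simp add: fixed_upset_def)
    define w where "w = (\<lambda>n::nat. if n = 0 then U else if n = 1 then V else U \<union> V)"
    have valw: "valuation X le w" using uU uV uUoV by (simp add: valuation_def w_def)
    have t0: "?S w (Var 0) = U" using jU by (simp add: w_def)
    have t1: "?S w (Var 1) = V" using jV by (simp add: w_def)
    have t2: "?S w (Var 2) = W" by (simp add: w_def W_def)
    have fO: "fixed_upset X le j (ior U V)" using ni fU fV unfolding nuclear_interpretation_def by blast
    have UW: "U \<subseteq> W" and VW: "V \<subseteq> W" using jid[OF uUoV] W_def by auto
    have iUW: "iimp U W = X" using IMPg[OF fU fW] UW unfolding up_def by auto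
    have iVW: "iimp V W = X" using IMPg[OF fV fW] VW unfolding up_def by auto
    show "ior U V = j (U \<union> V)"
    proof
      show "ior U V \<subseteq> j (U \<union> V)"
      proof
        fix x assume x: "x \<in> ior U V"
        have xX: "x \<in> X" using x fO unfolding fixed_upset_def upset_def by blast
        show "x \<in> j (U \<union> V)"
          using c3[OF ipc_ore[of "Var 0" "Var 1" "Var 2"] valw, of x] x xX t0 t1 t2 iUW iVW W_def by auto
      qed
      have "U \<union> V \<subseteq> ior U V"
        using c1[OF ipc_or1[of "Var 0" "Var 1"] valw] c1[OF ipc_or2[of "Var 1" "Var 0"] valw] t0 t1 by auto
      then have "j (U \<union> V) \<subseteq> j (ior U V)"
        using nuc_mono[OF nuc uUoV] fO unfolding fixed_upset_def by blast
      then show "j (U \<union> V) \<subseteq> ior U V" using fO unfolding fixed_upset_def by simp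
    qed
  qed
qed

end
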